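(* Let $H$ be a set of at least two pairwise disjoint line segments in the plane, $s\in H$, and $x$ a point of the farthest Voronoi region $V_f(s,H)$. Let $p\in s$ be the point with $d(p,x)=d(s,x)$ and let $r(s,x)$ be the ray emanating from $p$, passing through $x$ and extending to infinity. Then $r(s,x)$ intersects the boundary of $V_f(s,H)$ at a point $a_x$ (lying on the segment from $p$ to $x$), and the unbounded portion of $r(s,x)$ beyond $a_x$ lies entirely in $V_f(s,H)$.
   Context: Distances are Euclidean: $d(x,s)=\min_{q\in s}d(x,q)$. The farthest Voronoi region is $V_f(s,H)=\{x: d(x,s)>d(x,t)\ \forall t\in H\setminus\{s\}\}$. *)

theory Defs
  imports "HOL-Analysis.Analysis"
begin

type_synonym point = "real^2"

definition is_segment :: "point set \<Rightarrow> bool" where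
  "is_segment s \<longleftrightarrow> (\<exists>a b. a \<noteq> b \<and> s = closed_segment a b)"

abbreviation segdist :: "point \<Rightarrow> point set \<Rightarrow> real" where
  "segdist x s \<equiv> infdist x s"

definition farthest_region :: "point set \<Rightarrow> point set set \<Rightarrow> point set" where
  "farthest_region s H = {x. \<forall>t \<in> H - {s}. segdist x s > segdist x t}"

definition ray :: "point \<Rightarrow> point \<Rightarrow> point set" where
  "ray p x = {p + l *\<^sub>R (x - p) | l. l \<ge> 0}"

end

theory Submission
  imports Defs
begin

lemma ray_dist:
  fixes s :: "point set" and x p :: point
  assumes "convex s" "closed s" "p \<in> s" "dist p x = infdist x s" "l \<ge> 0"
  shows "infdist (p + l *\<^sub>R (x - p)) s = l * dist p x"
proof -
  let ?y = "p + l *\<^sub>R (x - p)"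
  have cl: "\<forall>z\<in>s. dist x p \<le> dist x z"
    using assms(4) infdist_le by (metis dist_commute)
  have ge: "dist ?y p \<le> dist ?y q" if q: "q \<in> s" for q
  proof -
    have i: "inner (x - p) (q - p) \<le> 0"
      using any_closest_point_dot[OF assms(1,2,3) q cl] .
    have "(dist ?y p)^2 \<le> (dist ?y q)^2"
    proof -
      have "(dist ?y q)^2 = (norm (l *\<^sub>R (x - p) - (q - p)))^2"
        by (simp add: dist_norm algebra_simps)
      also have "\<dots> = (norm (l *\<^sub>R (x - p)))^2 - 2 * l * inner (x - p) (q - p) + (norm (q - p))^2"
        by (simp add: power2_norm_eq_inner inner_diff inner_commute algebra_simps)
      also have "\<dots> \<ge> (norm (l *\<^sub>R (x - p)))^2"
      proof -
        have "2 * l * inner (x - p) (q - p) \<le> 0"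
          using i assms(5) by (simp add: mult_nonneg_nonpos)
        then show ?thesis using zero_le_power2[of "norm (q - p)"] by linarith
      qed
      finally show ?thesis by (simp add: dist_norm)
    qed
    then show ?thesis by (rule power2_le_imp_le[OF _ zero_le_dist])
  qed
  have "infdist ?y s = dist ?y p"
  proof (rule antisym)
    show "infdist ?y s \<le> dist ?y p" using infdist_le[OF assms(3)] .
    show "dist ?y p \<le> infdist ?y s"
    proof -
      have ne: "s \<noteq> {}" using assms(3) by auto
      have "dist ?y p \<le> (INF a\<in>s. dist ?y a)"
        using ge ne by (intro cINF_greatest) auto
      then show ?thesis using infdist_notempty[OF ne, of ?y] by simp
    qed
  qed
  also have "\<dots> = l * dist p x"
    using assms(5) by (simp add: dist_norm norm_minus_commute)
  finally show ?thesis .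
qed

theorem lemma6:
  fixes H :: "point set set" and s :: "point set" and x p :: point
  assumes "finite H" and "card H \<ge> 2"
    and "\<forall>t \<in> H. is_segment t"
    and "pairwise disjnt H"
    and "s \<in> H"
    and "x \<in> farthest_region s H"
    and "p \<in> s" and "dist p x = segdist x s"
  shows "\<exists>a \<in> closed_segment p x. a \<in> ray p x \<and> a \<in> frontier (farthest_region s H) \<and>
           (\<forall>y \<in> ray p x. dist p y > dist p a \<longrightarrow> y \<in> farthest_region s H)"
proof -
  define R where "R = farthest_region s H"
  define f where "f = (\<lambda>l::real. p + l *\<^sub>R (x - p))"
  define d where "d = dist p x"
  obtain a0 b0 where ab: "s = closed_segment a0 b0"
    using assms(3,5) unfolding is_segment_def by blast
  have cvx: "convex s" and cls: "closed s" using ab by auto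
  have fd: "segdist (f l) s = l * d" if "l \<ge> 0" for l
    unfolding f_def d_def using ray_dist[OF cvx cls assms(7,8) that] .
  have "H - {s} \<noteq> {}"
  proof
    assume "H - {s} = {}"
    then have "H = {s}" using assms(5) by auto
    then show False using assms(2) by simp
  qed
  then obtain t0 where t0: "t0 \<in> H - {s}" by blast
  have xR: "x \<in> R" using assms(6) R_def by simp
  have f1: "f 1 = x" unfolding f_def by simp
  have f0: "f 0 = p" unfolding f_def by simp
  have "segdist x s > segdist x t0" using xR t0 unfolding R_def farthest_region_def by auto
  then have dpos: "d > 0" using infdist_nonneg[of x t0] assms(8) d_def by linarith
  have distf: "dist (f l) (f l') = \<bar>l - l'\<bar> * d" for l l'
  proof -
    have "f l - f l' = (l - l') *\<^sub>R (x - p)" unfolding f_def by (simp add: algebra_simps)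
    then show ?thesis by (simp add: dist_norm d_def norm_minus_commute)
  qed
  have pR: "p \<notin> R"
  proof
    assume "p \<in> R"
    then have "segdist p s > segdist p t0" using t0 unfolding R_def farthest_region_def by auto
    then show False using infdist_nonneg[of p t0] assms(7) by simp
  qed
  have B: "f l' \<in> R" if l: "l \<ge> 0" "f l \<in> R" "l' \<ge> l" for l l'
    unfolding R_def farthest_region_def
  proof (intro CollectI ballI)
    fix t assume t: "t \<in> H - {s}"
    have "segdist (f l') t \<le> segdist (f l) t + dist (f l') (f l)" by (rule infdist_triangle)
    also have "\<dots> < segdist (f l) s + (l' - l) * d"
      using l(2) t distf[of l' l] l(3) unfolding R_def farthest_region_def by auto
    also have "\<dots> = segdist (f l') s" using fd l by (simp add: algebra_simps)
    finally show "segdist (f l') s > segdist (f l') t" .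
  qed
  define L where "L = {l. 0 \<le> l \<and> f l \<in> R}"
  define l0 where "l0 = Inf L"
  have bdd: "bdd_below L" unfolding L_def by (rule bdd_belowI[of _ 0]) auto
  have oneL: "1 \<in> L" unfolding L_def using xR f1 by simp
  have l01: "l0 \<le> 1" unfolding l0_def using cInf_lower[OF oneL bdd] .
  have l00: "l0 \<ge> 0" unfolding l0_def using oneL by (intro cInf_greatest) (auto simp: L_def intro!: exI[of _ 1])
  have up: "f l \<in> R" if ll0: "l > l0" for l
  proof -
    obtain l' where "l' \<in> L" "l' < l" using cInf_less_iff[of L l] oneL bdd ll0 l0_def by auto
    then show ?thesis using B[of l' l] unfolding L_def by auto
  qed
  define a where "a = f l0"
  have aclos: "a \<in> closure R"
    unfolding closure_approachable
  proof (intro allI impI)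
    fix e :: real assume e: "e > 0"
    have "f (l0 + e / (2*d)) \<in> R" using up e dpos by simp
    moreover have "dist (f (l0 + e / (2*d))) a = e / 2"
      unfolding a_def distf using e dpos by simp
    ultimately show "\<exists>y\<in>R. dist y a < e" using e by force
  qed
  have aint: "a \<notin> interior R"
  proof
    assume "a \<in> interior R"
    then obtain e where e: "e > 0" "ball a e \<subseteq> R" using mem_interior by blast
    show False
    proof (cases "l0 = 0")
      case True
      then have "a = p" using a_def f0 by simp
      then show False using pR e centre_in_ball[of p e] by blast
    next
      case False
      define l where "l = max 0 (l0 - e / (2*d))"
      have ll: "l < l0" "l \<ge> 0" "l0 - l \<le> e / (2*d)" using False l00 e dpos unfolding l_def by auto
      have "dist a (f l) = (l0 - l) * d" unfolding a_def distf using ll by simp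
      also have "\<dots> \<le> e / (2*d) * d" using ll dpos by (intro mult_right_mono) auto
      also have "\<dots> < e" using dpos e by simp
      finally have "f l \<in> R" using e by auto
      then have "l \<in> L" using ll unfolding L_def by auto
      then have "l0 \<le> l" unfolding l0_def using cInf_lower[OF _ bdd] by blast
      then show False using ll by simp
    qed
  qed
  have aseg: "a \<in> closed_segment p x"
    unfolding closed_segment_def a_def f_def using l00 l01
    by (auto intro!: exI[of _ l0] simp: algebra_simps)
  have aray: "a \<in> ray p x" unfolding ray_def a_def f_def using l00 by auto
  have rest: "\<forall>y \<in> ray p x. dist p y > dist p a \<longrightarrow> y \<in> R"
  proof (intro ballI impI)
    fix y assume "y \<in> ray p x" and gt: "dist p y > dist p a"
    then obtain l where l: "l \<ge> 0" "y = f l" unfolding ray_def f_def by auto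
    have "dist p y = l * d" using distf[of 0 l] f0 l by simp
    moreover have "dist p a = l0 * d" using distf[of 0 l0] f0 l00 a_def by simp
    ultimately have "l0 < l" using gt dpos by (simp add: mult_less_cancel_right)
    then show "y \<in> R" using up l by simp
  qed
  show ?thesis
    using aseg aray aclos aint rest unfolding frontier_def R_def by blast
qed

end
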